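(* Let $\mathcal{P}=\bigcup_n \mathcal{P}_n$ be a p-quasirandom family of permutations. Then for every fixed word $\sigma=\sigma_1\ldots\sigma_k$ of $k$ distinct positive integers, the probability that a uniformly random $\pi\in\mathcal{P}_n$ contains $\sigma$ as a subsequence tends to $1/k!$ as $n\to\infty$ (over those $n$ with $\mathcal{P}_n\neq\emptyset$).
   Context: A permutation $\pi=\pi_1\ldots\pi_n\in\mathcal{S}_n$ contains a word $\sigma=\sigma_1\ldots\sigma_k$ of distinct letters as a subsequence if there are indices $i_1<\cdots<i_k$ with $\pi_{i_1}=\sigma_1,\ldots,\pi_{i_k}=\sigma_k$. Let $\mathcal{P}_n\subseteq\mathcal{S}_n$ be nonempty for infinitely many $n$ and $\mathcal{P}=\bigcup_n\mathcal{P}_n$. For $\tau\in\mathcal{S}_k$ and $\mathcal{P}_n\ne\emptyset$, let $f(n,\tau)$ be the fraction of permutations in $\mathcal{P}_n$ containing $\tau$ as a subsequence. $\mathcal{P}$ is p-quasirandom if for every $k\ge1$, $\lim_{n\to\infty}\max_{\tau\in\mathcal{S}_k}|f(n,\tau)-1/k!|=0$, the limit taken over $n$ with $\mathcal{P}_n\neq\emptyset$. *)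

theory Defs
  imports Complex_Main
begin

definition perms :: "nat \<Rightarrow> nat list set" where
  "perms n = {\<pi>. distinct \<pi> \<and> set \<pi> = {1..n}}"

definition contains_subseq :: "nat list \<Rightarrow> nat list \<Rightarrow> bool" where
  "contains_subseq \<pi> \<sigma> \<longleftrightarrow>
     (\<exists>idx :: nat list. length idx = length \<sigma> \<and> sorted_wrt (<) idx \<and>
        (\<forall>j < length \<sigma>. idx ! j < length \<pi> \<and> \<pi> ! (idx ! j) = \<sigma> ! j))"

definition frac :: "(nat \<Rightarrow> nat list set) \<Rightarrow> nat \<Rightarrow> nat list \<Rightarrow> real" where
  "frac P n \<sigma> = real (card {\<pi> \<in> P n. contains_subseq \<pi> \<sigma>}) / real (card (P n))"

definition nonempty_seq :: "(nat \<Rightarrow> nat list set) \<Rightarrow> nat filter" where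
  "nonempty_seq P = inf sequentially (principal {n. P n \<noteq> {}})"

definition p_quasirandom :: "(nat \<Rightarrow> nat list set) \<Rightarrow> bool" where
  "p_quasirandom P \<longleftrightarrow>
     (\<forall>k \<ge> 1. ((\<lambda>n. Max ((\<lambda>\<tau>. \<bar>frac P n \<tau> - 1 / fact k\<bar>) ` perms k))
                 \<longlongrightarrow> 0) (nonempty_seq P))"

end

theory Submission
  imports Defs "HOL-Library.Sublist" "HOL-Combinatorics.Multiset_Permutations"
begin

lemma cs_nil: "contains_subseq \<pi> []"
  unfolding contains_subseq_def by (rule exI[of _ "[]"]) simp

lemma cs_nil2: "\<not> contains_subseq [] (s#\<sigma>)"
  unfolding contains_subseq_def by auto

lemma cs_cons: "contains_subseq \<pi> \<sigma> \<Longrightarrow> contains_subseq (x#\<pi>) \<sigma>"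
  unfolding contains_subseq_def
proof (elim exE conjE)
  fix idx assume a: "length idx = length \<sigma>" "sorted_wrt (<) idx"
    "\<forall>j<length \<sigma>. idx ! j < length \<pi> \<and> \<pi> ! (idx ! j) = \<sigma> ! j"
  show "\<exists>idx. length idx = length \<sigma> \<and> sorted_wrt (<) idx \<and>
        (\<forall>j<length \<sigma>. idx ! j < length (x#\<pi>) \<and> (x#\<pi>) ! (idx ! j) = \<sigma> ! j)"
    using a by (intro exI[of _ "map Suc idx"]) (auto simp: sorted_wrt_map)
qed

lemma cs_cons2: "contains_subseq \<pi> \<sigma> \<Longrightarrow> contains_subseq (x#\<pi>) (x#\<sigma>)"
  unfolding contains_subseq_def
proof (elim exE conjE)
  fix idx assume a: "length idx = length \<sigma>" "sorted_wrt (<) idx"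
    "\<forall>j<length \<sigma>. idx ! j < length \<pi> \<and> \<pi> ! (idx ! j) = \<sigma> ! j"
  have "\<forall>j<length (x#\<sigma>). (0 # map Suc idx) ! j < length (x#\<pi>) \<and> (x#\<pi>) ! ((0 # map Suc idx) ! j) = (x#\<sigma>) ! j"
  proof (intro allI impI)
    fix j assume "j < length (x#\<sigma>)"
    then show "(0 # map Suc idx) ! j < length (x#\<pi>) \<and> (x#\<pi>) ! ((0 # map Suc idx) ! j) = (x#\<sigma>) ! j"
      using a by (cases j) auto
  qed
  then show "\<exists>idx. length idx = length (x#\<sigma>) \<and> sorted_wrt (<) idx \<and>
        (\<forall>j<length (x#\<sigma>). idx ! j < length (x#\<pi>) \<and> (x#\<pi>) ! (idx ! j) = (x#\<sigma>) ! j)"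
    using a by (intro exI[of _ "0 # map Suc idx"]) (auto simp: sorted_wrt_map)
qed

lemma cs_inv:
  assumes "contains_subseq (x#\<pi>) (s#\<sigma>)"
  shows "contains_subseq \<pi> (s#\<sigma>) \<or> (s = x \<and> contains_subseq \<pi> \<sigma>)"
proof -
  obtain idx where a: "length idx = length (s#\<sigma>)" "sorted_wrt (<) idx"
    "\<forall>j<length (s#\<sigma>). idx ! j < length (x#\<pi>) \<and> (x#\<pi>) ! (idx ! j) = (s#\<sigma>) ! j"
    using assms unfolding contains_subseq_def by blast
  then obtain i rest where idx: "idx = i # rest" by (cases idx) auto
  show ?thesis
  proof (cases "i = 0")
    case True
    have sx: "s = x" using a(3)[rule_format, of 0] idx True by simp
    have pos: "\<forall>y\<in>set rest. 0 < y" using a(2) idx True by simp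
    have "contains_subseq \<pi> \<sigma>"
      unfolding contains_subseq_def
    proof (intro exI[of _ "map (\<lambda>i. i - 1) rest"] conjI allI impI)
      show "length (map (\<lambda>i. i - 1) rest) = length \<sigma>" using a(1) idx by simp
      show "sorted_wrt (<) (map (\<lambda>i. i - 1) rest)"
        unfolding sorted_wrt_map
      proof (rule sorted_wrt_mono_rel[of rest "(<)"])
        show "sorted_wrt (<) rest" using a(2) idx by simp
      qed (use pos in auto)
    next
      fix j assume j: "j < length \<sigma>"
      have r: "rest ! j \<in> set rest" using j a(1) idx by simp
      have h: "rest ! j < Suc (length \<pi>) \<and> (x#\<pi>) ! (rest ! j) = \<sigma> ! j"
        using a(3)[rule_format, of "Suc j"] j idx by simp
      have p: "rest ! j > 0" using pos r by blast
      show "map (\<lambda>i. i - 1) rest ! j < length \<pi>" using h p j a(1) idx by (cases "rest ! j") auto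
      show "\<pi> ! (map (\<lambda>i. i - 1) rest ! j) = \<sigma> ! j"
        using h p j a(1) idx by (cases "rest ! j") auto
    qed
    then show ?thesis using sx by simp
  next
    case False
    have pos: "\<forall>y\<in>set idx. 0 < y" using a(2) idx False by auto
    have "contains_subseq \<pi> (s#\<sigma>)"
      unfolding contains_subseq_def
    proof (intro exI[of _ "map (\<lambda>i. i - 1) idx"] conjI allI impI)
      show "length (map (\<lambda>i. i - 1) idx) = length (s#\<sigma>)" using a(1) by simp
      show "sorted_wrt (<) (map (\<lambda>i. i - 1) idx)"
        unfolding sorted_wrt_map
      proof (rule sorted_wrt_mono_rel[of idx "(<)"])
        show "sorted_wrt (<) idx" using a(2) by simp
      qed (use pos in auto)
    next
      fix j assume j: "j < length (s#\<sigma>)"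
      have r: "idx ! j \<in> set idx" using j a(1) by simp
      have h: "idx ! j < Suc (length \<pi>) \<and> (x#\<pi>) ! (idx ! j) = (s#\<sigma>) ! j"
        using a(3)[rule_format, of j] j by simp
      have p: "idx ! j > 0" using pos r by blast
      show "map (\<lambda>i. i - 1) idx ! j < length \<pi>" using h p j a(1) by (cases "idx ! j") auto
      show "\<pi> ! (map (\<lambda>i. i - 1) idx ! j) = (s#\<sigma>) ! j"
        using h p j a(1) by (cases "idx ! j") auto
    qed
    then show ?thesis by simp
  qed
qed

lemma cs_iff_subseq: "contains_subseq \<pi> \<sigma> \<longleftrightarrow> subseq \<sigma> \<pi>"
proof
  show "contains_subseq \<pi> \<sigma> \<Longrightarrow> subseq \<sigma> \<pi>"
  proof (induction \<pi> arbitrary: \<sigma>)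
    case Nil
    then show ?case by (cases \<sigma>) (auto simp: cs_nil2)
  next
    case (Cons x \<pi>)
    show ?case
    proof (cases \<sigma>)
      case Nil then show ?thesis by simp
    next
      case (Cons s \<sigma>')
      from cs_inv[of x \<pi> s \<sigma>'] Cons.prems Cons
      have "contains_subseq \<pi> \<sigma> \<or> (s = x \<and> contains_subseq \<pi> \<sigma>')" by simp
      then show ?thesis
      proof
        assume "contains_subseq \<pi> \<sigma>"
        then show ?thesis using Cons.IH by (auto intro: list_emb_Cons)
      next
        assume "s = x \<and> contains_subseq \<pi> \<sigma>'"
        then show ?thesis using Cons.IH Cons by (auto intro: list_emb_Cons2)
      qed
    qed
  qed
next
  show "subseq \<sigma> \<pi> \<Longrightarrow> contains_subseq \<pi> \<sigma>"
    by (induction rule: list_emb.induct) (auto intro: cs_nil cs_cons cs_cons2)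
qed

lemma subseq_set: "subseq xs ys \<Longrightarrow> set xs \<subseteq> set ys"
  by (auto elim: list_emb_set)

lemma subseq_distinct_filter:
  "distinct \<pi> \<Longrightarrow> subseq \<sigma> \<pi> \<Longrightarrow> filter (\<lambda>x. x \<in> set \<sigma>) \<pi> = \<sigma>"
proof (induction \<pi> arbitrary: \<sigma>)
  case Nil
  then show ?case by (cases \<sigma>) auto
next
  case (Cons x \<pi>)
  show ?case
  proof (cases \<sigma>)
    case Nil then show ?thesis by simp
  next
    case (Cons s \<sigma>')
    show ?thesis
    proof (cases "s = x")
      case True
      then have "subseq \<sigma>' \<pi>" using Cons Cons.prems by simp
      moreover have "x \<notin> set \<pi>" using Cons.prems by simp
      ultimately have "filter (\<lambda>y. y \<in> set \<sigma>) \<pi> = filter (\<lambda>y. y \<in> set \<sigma>') \<pi>"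
        using Cons True by (auto intro: filter_cong)
      then show ?thesis using Cons.IH[of \<sigma>'] Cons.prems Cons True \<open>subseq \<sigma>' \<pi>\<close> by simp
    next
      case False
      then have s: "subseq \<sigma> \<pi>" using Cons Cons.prems by simp
      have "x \<notin> set \<sigma>" using subseq_set[OF s] Cons.prems by auto
      then show ?thesis using Cons.IH[OF _ s] Cons.prems by simp
    qed
  qed
qed

lemma cs_distinct_iff:
  assumes "distinct \<pi>" "set \<sigma> \<subseteq> set \<pi>"
  shows "contains_subseq \<pi> \<sigma> \<longleftrightarrow> filter (\<lambda>x. x \<in> set \<sigma>) \<pi> = \<sigma>"
  unfolding cs_iff_subseq using subseq_distinct_filter[OF assms(1)]
  by (metis subseq_filter_left)

lemma perms_eq: "perms m = permutations_of_set {1..m}"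
  unfolding perms_def permutations_of_set_def by auto

lemma finite_perms: "finite (perms m)"
  unfolding perms_eq by simp

lemma card_perms: "card (perms m) = fact m"
  unfolding perms_eq by simp


lemma relabel_le:
  assumes t: "\<tau> \<in> permutations_of_set S" and t': "\<tau>' \<in> permutations_of_set S"
    and Sm: "S \<subseteq> {1..m}"
  shows "card {\<rho> \<in> perms m. filter (\<lambda>x. x \<in> S) \<rho> = \<tau>}
       \<le> card {\<rho> \<in> perms m. filter (\<lambda>x. x \<in> S) \<rho> = \<tau>'}"
proof -
  define f where "f x = (case map_of (zip \<tau> \<tau>') x of None \<Rightarrow> x | Some y \<Rightarrow> y)" for x
  have st: "set \<tau> = S" "distinct \<tau>" using t by (auto simp: permutations_of_set_def)
  have st': "set \<tau>' = S" "distinct \<tau>'" using t' by (auto simp: permutations_of_set_def)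
  have len: "length \<tau> = length \<tau>'"
    using st st' distinct_card by metis
  have fnth: "f (\<tau> ! i) = \<tau>' ! i" if "i < length \<tau>" for i
    unfolding f_def using map_of_zip_nth[OF len st(2)] that len by simp
  have fout: "f x = x" if "x \<notin> S" for x
  proof -
    have "map_of (zip \<tau> \<tau>') x = None" using map_of_zip_is_None[OF len] that st by simp
    then show ?thesis unfolding f_def by simp
  qed
  have fS: "f x \<in> S" if xS: "x \<in> S" for x
  proof -
    obtain i where "i < length \<tau>" "x = \<tau> ! i" using xS st in_set_conv_nth[of x \<tau>] by metis
    then show ?thesis using fnth len st' by auto
  qed
  have fS_iff: "f x \<in> S \<longleftrightarrow> x \<in> S" for x
    using fS fout by metis
  have inj: "inj f"
  proof (rule injI)
    fix x y assume e: "f x = f y"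
    show "x = y"
    proof (cases "x \<in> S")
      case True
      then have yS: "y \<in> S" using e fS_iff by metis
      obtain i where i: "i < length \<tau>" "x = \<tau> ! i" using True st in_set_conv_nth[of x \<tau>] by metis
      obtain j where j: "j < length \<tau>" "y = \<tau> ! j" using yS st in_set_conv_nth[of y \<tau>] by metis
      have "\<tau>' ! i = \<tau>' ! j" using e i j fnth by simp
      then have "i = j" using nth_eq_iff_index_eq[OF st'(2)] i j len by simp
      then show ?thesis using i j by simp
    next
      case False
      then have "y \<notin> S" using e fS_iff by metis
      then show ?thesis using e fout False by simp
    qed
  qed
  have fimg: "f ` {1..m} = {1..m}"
  proof
    show "f ` {1..m} \<subseteq> {1..m}" using fS fout Sm by (smt (verit) image_subset_iff subsetD)
  next
    show "{1..m} \<subseteq> f ` {1..m}"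
    proof
      fix y assume y: "y \<in> {1..m}"
      show "y \<in> f ` {1..m}"
      proof (cases "y \<in> S")
        case True
        obtain i where i: "i < length \<tau>'" "y = \<tau>' ! i" using True st' in_set_conv_nth[of y \<tau>'] by metis
        have "\<tau> ! i \<in> {1..m}" using i len st Sm by (metis nth_mem subsetD)
        then show ?thesis using fnth i len by (metis image_eqI)
      next
        case False
        then show ?thesis using y fout by (metis image_eqI)
      qed
    qed
  qed
  have maptau: "map f \<tau> = \<tau>'"
    by (rule nth_equalityI) (use len fnth in auto)
  show ?thesis
  proof (rule card_inj_on_le[where f="map f"])
    show "inj_on (map f) {\<rho> \<in> perms m. filter (\<lambda>x. x \<in> S) \<rho> = \<tau>}"
      using inj_mapI[OF inj] by (auto intro: inj_on_subset)
    show "finite {\<rho> \<in> perms m. filter (\<lambda>x. x \<in> S) \<rho> = \<tau>'}"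
      using finite_perms by simp
    show "map f ` {\<rho> \<in> perms m. filter (\<lambda>x. x \<in> S) \<rho> = \<tau>}
        \<subseteq> {\<rho> \<in> perms m. filter (\<lambda>x. x \<in> S) \<rho> = \<tau>'}"
    proof
      fix r assume "r \<in> map f ` {\<rho> \<in> perms m. filter (\<lambda>x. x \<in> S) \<rho> = \<tau>}"
      then obtain \<rho> where r: "r = map f \<rho>" "\<rho> \<in> perms m" "filter (\<lambda>x. x \<in> S) \<rho> = \<tau>"
        by auto
      have "distinct r" using r inj unfolding perms_def by (simp add: distinct_map inj_on_subset[OF inj])
      moreover have "set r = {1..m}" using r fimg unfolding perms_def by simp
      moreover have "filter (\<lambda>x. x \<in> S) r = \<tau>'"
        using r fS_iff maptau by (simp add: filter_map comp_def)
      ultimately show "r \<in> {\<rho> \<in> perms m. filter (\<lambda>x. x \<in> S) \<rho> = \<tau>'}"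
        unfolding perms_def by simp
    qed
  qed
qed

lemma count_class:
  assumes Sm: "S \<subseteq> {1..m}" and s: "\<sigma> \<in> permutations_of_set S"
  shows "fact m = fact (card S) * card {\<rho> \<in> perms m. filter (\<lambda>x. x \<in> S) \<rho> = \<sigma>}"
proof -
  define C where "C \<tau> = {\<rho> \<in> perms m. filter (\<lambda>x. x \<in> S) \<rho> = \<tau>}" for \<tau>
  have finS: "finite S" using Sm finite_subset by blast
  have eq: "card (C \<tau>) = card (C \<sigma>)" if "\<tau> \<in> permutations_of_set S" for \<tau>
    using relabel_le[OF that s Sm] relabel_le[OF s that Sm] unfolding C_def by simp
  have U: "perms m = (\<Union>\<tau>\<in>permutations_of_set S. C \<tau>)"
  proof
    show "perms m \<subseteq> (\<Union>\<tau>\<in>permutations_of_set S. C \<tau>)"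
    proof
      fix \<rho> assume r: "\<rho> \<in> perms m"
      have "filter (\<lambda>x. x \<in> S) \<rho> \<in> permutations_of_set S"
        using r Sm unfolding perms_def permutations_of_set_def by auto
      then show "\<rho> \<in> (\<Union>\<tau>\<in>permutations_of_set S. C \<tau>)" using r unfolding C_def by blast
    qed
  qed (auto simp: C_def)
  have "fact m = card (\<Union>\<tau>\<in>permutations_of_set S. C \<tau>)" using U card_perms by metis
  also have "\<dots> = (\<Sum>\<tau>\<in>permutations_of_set S. card (C \<tau>))"
    by (rule card_UN_disjoint) (auto simp: C_def finite_perms finS)
  also have "\<dots> = (\<Sum>\<tau>\<in>permutations_of_set S. card (C \<sigma>))"
    using eq by simp
  also have "\<dots> = fact (card S) * card (C \<sigma>)" using finS by simp
  finally show ?thesis unfolding C_def .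
qed


lemma ev_ge: "eventually (\<lambda>n. n \<ge> m) (nonempty_seq P)"
proof -
  have "eventually (\<lambda>n. n \<ge> m) sequentially" by (rule eventually_ge_at_top)
  then show ?thesis unfolding nonempty_seq_def by (rule filter_leD[rotated]) simp
qed

lemma lim_each:
  assumes qr: "p_quasirandom P" and m: "m \<ge> 1" and r: "\<rho> \<in> perms m"
  shows "((\<lambda>n. frac P n \<rho>) \<longlongrightarrow> 1 / fact m) (nonempty_seq P)"
proof -
  define g where "g n = Max ((\<lambda>\<tau>. \<bar>frac P n \<tau> - 1 / fact m\<bar>) ` perms m)" for n
  have g: "(g \<longlongrightarrow> 0) (nonempty_seq P)" using qr m unfolding p_quasirandom_def g_def by blast
  have le: "norm (frac P n \<rho> - 1 / fact m) \<le> norm (g n) * 1" for n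
  proof -
    have "\<bar>frac P n \<rho> - 1 / fact m\<bar> \<le> g n"
      unfolding g_def by (rule Max_ge) (use r finite_perms in auto)
    then show ?thesis by simp
  qed
  have "((\<lambda>n. frac P n \<rho> - 1 / fact m) \<longlongrightarrow> 0) (nonempty_seq P)"
    by (rule tendsto_0_le[OF g, where K=1]) (use le in \<open>simp add: always_eventually\<close>)
  from tendsto_add[OF this tendsto_const[of "1 / fact m"]] show ?thesis by simp
qed

theorem mainTheorem1:
  fixes P :: "nat \<Rightarrow> nat list set" and \<sigma> :: "nat list"
  assumes family: "\<And>n. P n \<subseteq> perms n"
    and inf_nonempty: "infinite {n. P n \<noteq> {}}"
    and qr: "p_quasirandom P"
    and dist: "distinct \<sigma>"
    and pos: "\<forall>x \<in> set \<sigma>. x \<ge> 1"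
  shows "((\<lambda>n. frac P n \<sigma>) \<longlongrightarrow> 1 / fact (length \<sigma>)) (nonempty_seq P)"
proof (cases "\<sigma> = []")
  case True
  have finP: "finite (P n)" for n using family finite_perms finite_subset by metis
  have "eventually (\<lambda>n. P n \<noteq> {}) (nonempty_seq P)"
    unfolding nonempty_seq_def by (simp add: eventually_inf_principal)
  then have "eventually (\<lambda>n. frac P n \<sigma> = 1 / fact (length \<sigma>)) (nonempty_seq P)"
    by eventually_elim (use True finP in \<open>simp add: frac_def cs_nil\<close>)
  then show ?thesis by (rule tendsto_eventually)
next
  case False
  define S where "S = set \<sigma>"
  define m where "m = Max S"
  have finS: "finite S" unfolding S_def by simp
  have Sne: "S \<noteq> {}" using False unfolding S_def by simp
  have Sm: "S \<subseteq> {1..m}" using pos Max_ge[OF finS] unfolding m_def S_def by auto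
  have m1: "m \<ge> 1" using Sm Sne by auto
  have kS: "card S = length \<sigma>" unfolding S_def using dist by (simp add: distinct_card)
  define A where "A = {\<rho> \<in> perms m. filter (\<lambda>x. x \<in> S) \<rho> = \<sigma>}"
  have sperm: "\<sigma> \<in> permutations_of_set S" unfolding S_def permutations_of_set_def using dist by simp
  have cnt: "fact m = fact (length \<sigma>) * card A"
    using count_class[OF Sm sperm] kS unfolding A_def by simp
  have finA: "finite A" unfolding A_def using finite_perms by simp
  have finP: "finite (P n)" for n using family finite_perms finite_subset by metis
  have key: "frac P n \<sigma> = (\<Sum>\<rho>\<in>A. frac P n \<rho>)" if nm: "n \<ge> m" for n
  proof -
    define r where "r \<pi> = filter (\<lambda>x. x \<in> {1..m}) \<pi>" for \<pi>
    have facts: "distinct \<pi> \<and> set \<pi> = {1..n} \<and> r \<pi> \<in> perms m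
       \<and> (contains_subseq \<pi> \<sigma> \<longleftrightarrow> filter (\<lambda>x. x \<in> S) \<pi> = \<sigma>)
       \<and> (\<forall>\<rho>\<in>perms m. contains_subseq \<pi> \<rho> \<longleftrightarrow> r \<pi> = \<rho>)
       \<and> filter (\<lambda>x. x \<in> S) (r \<pi>) = filter (\<lambda>x. x \<in> S) \<pi>" if "\<pi> \<in> P n" for \<pi>
    proof -
      have d: "distinct \<pi>" and st: "set \<pi> = {1..n}" using family[of n] that unfolding perms_def by auto
      have rp: "r \<pi> \<in> perms m" unfolding perms_def r_def using d st nm by auto
      have c1: "contains_subseq \<pi> \<sigma> \<longleftrightarrow> filter (\<lambda>x. x \<in> S) \<pi> = \<sigma>"
      proof -
        have "set \<sigma> \<subseteq> set \<pi>" using Sm st nm unfolding S_def by auto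
        from cs_distinct_iff[OF d this] show ?thesis unfolding S_def .
      qed
      have c2: "\<forall>\<rho>\<in>perms m. contains_subseq \<pi> \<rho> \<longleftrightarrow> r \<pi> = \<rho>"
      proof
        fix \<rho> assume "\<rho> \<in> perms m"
        then have "set \<rho> = {1..m}" unfolding perms_def by simp
        then show "contains_subseq \<pi> \<rho> \<longleftrightarrow> r \<pi> = \<rho>"
          using cs_distinct_iff[OF d, of \<rho>] st nm unfolding r_def by auto
      qed
      have c3: "filter (\<lambda>x. x \<in> S) (r \<pi>) = filter (\<lambda>x. x \<in> S) \<pi>"
        unfolding r_def filter_filter using Sm by (intro filter_cong) auto
      show ?thesis using d st rp c1 c2 c3 by blast
    qed
    have U: "{\<pi> \<in> P n. contains_subseq \<pi> \<sigma>} = (\<Union>\<rho>\<in>A. {\<pi> \<in> P n. contains_subseq \<pi> \<rho>})"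
    proof
      show "{\<pi> \<in> P n. contains_subseq \<pi> \<sigma>} \<subseteq> (\<Union>\<rho>\<in>A. {\<pi> \<in> P n. contains_subseq \<pi> \<rho>})"
      proof
        fix \<pi> assume "\<pi> \<in> {\<pi> \<in> P n. contains_subseq \<pi> \<sigma>}"
        then have p: "\<pi> \<in> P n" "contains_subseq \<pi> \<sigma>" by auto
        note f = facts[OF p(1)]
        have "r \<pi> \<in> A" unfolding A_def using f p(2) by auto
        moreover have "contains_subseq \<pi> (r \<pi>)" using f by auto
        ultimately show "\<pi> \<in> (\<Union>\<rho>\<in>A. {\<pi> \<in> P n. contains_subseq \<pi> \<rho>})" using p by auto
      qed
    next
      show "(\<Union>\<rho>\<in>A. {\<pi> \<in> P n. contains_subseq \<pi> \<rho>}) \<subseteq> {\<pi> \<in> P n. contains_subseq \<pi> \<sigma>}"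
      proof
        fix \<pi> assume "\<pi> \<in> (\<Union>\<rho>\<in>A. {\<pi> \<in> P n. contains_subseq \<pi> \<rho>})"
        then obtain \<rho> where p: "\<rho> \<in> A" "\<pi> \<in> P n" "contains_subseq \<pi> \<rho>" by auto
        note f = facts[OF p(2)]
        have "\<rho> = r \<pi>" using f p unfolding A_def by auto
        then have "filter (\<lambda>x. x \<in> S) \<pi> = \<sigma>" using f p(1) unfolding A_def by auto
        then show "\<pi> \<in> {\<pi> \<in> P n. contains_subseq \<pi> \<sigma>}" using f p by auto
      qed
    qed
    have "card {\<pi> \<in> P n. contains_subseq \<pi> \<sigma>} = (\<Sum>\<rho>\<in>A. card {\<pi> \<in> P n. contains_subseq \<pi> \<rho>})"
      unfolding U
    proof (rule card_UN_disjoint[OF finA])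
      show "\<forall>\<rho>\<in>A. finite {\<pi> \<in> P n. contains_subseq \<pi> \<rho>}" using finP by simp
      show "\<forall>i\<in>A. \<forall>j\<in>A. i \<noteq> j \<longrightarrow>
        {\<pi> \<in> P n. contains_subseq \<pi> i} \<inter> {\<pi> \<in> P n. contains_subseq \<pi> j} = {}"
      proof (intro ballI impI)
        fix i j assume ij: "i \<in> A" "j \<in> A" "i \<noteq> j"
        have ip: "i \<in> perms m" "j \<in> perms m" using ij unfolding A_def by auto
        show "{\<pi> \<in> P n. contains_subseq \<pi> i} \<inter> {\<pi> \<in> P n. contains_subseq \<pi> j} = {}"
        proof (rule ccontr)
          assume "{\<pi> \<in> P n. contains_subseq \<pi> i} \<inter> {\<pi> \<in> P n. contains_subseq \<pi> j} \<noteq> {}"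
          then obtain \<pi> where p: "\<pi> \<in> P n" "contains_subseq \<pi> i" "contains_subseq \<pi> j" by blast
          have "\<forall>\<rho>\<in>perms m. contains_subseq \<pi> \<rho> \<longleftrightarrow> r \<pi> = \<rho>" using facts[OF p(1)] by blast
          then have "r \<pi> = i" "r \<pi> = j" using ip p by auto
          then show False using ij(3) by simp
        qed
      qed
    qed
    then show ?thesis unfolding frac_def by (simp add: sum_divide_distrib)
  qed
  have ev: "eventually (\<lambda>n. (\<Sum>\<rho>\<in>A. frac P n \<rho>) = frac P n \<sigma>) (nonempty_seq P)"
    using ev_ge[of m P] by eventually_elim (use key in simp)
  have "((\<lambda>n. \<Sum>\<rho>\<in>A. frac P n \<rho>) \<longlongrightarrow> (\<Sum>\<rho>\<in>A. 1 / fact m)) (nonempty_seq P)"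
    by (rule tendsto_sum) (use lim_each[OF qr m1] in \<open>auto simp: A_def\<close>)
  moreover have "(\<Sum>\<rho>\<in>A. 1 / fact m :: real) = 1 / fact (length \<sigma>)"
  proof -
    have "(\<Sum>\<rho>\<in>A. 1 / fact m :: real) = real (card A) / fact m" by simp
    also have "\<dots> = 1 / fact (length \<sigma>)"
    proof -
      have "(fact m :: real) = fact (length \<sigma>) * real (card A)"
        using cnt by (metis of_nat_fact of_nat_mult)
      moreover have "real (card A) \<noteq> 0" using calculation by (metis fact_nonzero mult_zero_right)
      ultimately show ?thesis by simp
    qed
    finally show ?thesis .
  qed
  ultimately have "((\<lambda>n. \<Sum>\<rho>\<in>A. frac P n \<rho>) \<longlongrightarrow> 1 / fact (length \<sigma>)) (nonempty_seq P)" by simp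
  then show ?thesis using ev by (rule Lim_transform_eventually)
qed

end
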